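(* Let $R\in\mathbb C^{n\times n}$ be such that $\tilde R=\frac12(R+R^* )$ is positive definite, and let $\bar R=\frac12(R-R^* )$. Then: (1) $R$ is invertible; (2) $\frac12(R^{-1}+(R^* )^{-1})$ is positive definite; (3) $\left(\frac{R+R^*}{2}\right)^{-1}\succcurlyeq\frac{R^{-1}+(R^* )^{-1}}{2}$; (4) $\frac{R+R^*}{2}\succcurlyeq\frac{R^*R^{-1}R^*+R(R^* )^{-1}R}{2}$; (5) for $-1\le\alpha\le1$ let $W_\alpha=\tilde R+\alpha\bar R$; then for all $\alpha,\beta\in[-1,1]$ with $|\alpha|\le|\beta|$, \[ \frac{W_\alpha^{-1}+(W_\alpha^* )^{-1}}{2}\succcurlyeq\frac{W_\beta^{-1}+(W_\beta^* )^{-1}}{2}. \]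
   Context: $M^*$ is the conjugate transpose. For Hermitian $X,Y$, $X\succcurlyeq Y$ means $X-Y$ is positive semidefinite. *)

theory Defs
  imports "HOL-Analysis.Analysis"
begin

definition cadj :: "complex^'n^'n \<Rightarrow> complex^'n^'n" where
  "cadj A = (\<chi> i j. cnj (A $ j $ i))"

definition hermitian :: "complex^'n^'n \<Rightarrow> bool" where
  "hermitian A \<longleftrightarrow> cadj A = A"

definition qform :: "complex^'n^'n \<Rightarrow> complex^'n \<Rightarrow> complex" where
  "qform A x = (\<Sum>i\<in>UNIV. \<Sum>j\<in>UNIV. cnj (x $ i) * A $ i $ j * x $ j)"

definition pos_semidef :: "complex^'n^'n \<Rightarrow> bool" where
  "pos_semidef A \<longleftrightarrow> hermitian A \<and> (\<forall>x. Im (qform A x) = 0 \<and> 0 \<le> Re (qform A x))"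

definition pos_def :: "complex^'n^'n \<Rightarrow> bool" where
  "pos_def A \<longleftrightarrow> hermitian A \<and> (\<forall>x. x \<noteq> 0 \<longrightarrow> Im (qform A x) = 0 \<and> 0 < Re (qform A x))"

definition loewner_ge :: "complex^'n^'n \<Rightarrow> complex^'n^'n \<Rightarrow> bool" where
  "loewner_ge X Y \<longleftrightarrow> hermitian X \<and> hermitian Y \<and> pos_semidef (X - Y)"

end

theory Submission imports Defs begin


type_synonym 'n cm = "complex^'n^'n"

definition ip :: "complex^'n \<Rightarrow> complex^'n \<Rightarrow> complex" where
  "ip x y = (\<Sum>i\<in>UNIV. cnj (x $ i) * y $ i)"

lemma qform_ip: "qform A x = ip x (A *v x)"
  unfolding qform_def ip_def matrix_vector_mult_def
  by (simp add: sum_distrib_left mult.assoc)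

lemma ip_adj: "ip x (A *v y) = ip (cadj A *v x) y"
proof -
  have "ip x (A *v y) = (\<Sum>i\<in>UNIV. \<Sum>j\<in>UNIV. cnj (x$i) * A$i$j * y$j)"
    unfolding ip_def matrix_vector_mult_def by (simp add: sum_distrib_left mult.assoc)
  also have "\<dots> = (\<Sum>j\<in>UNIV. \<Sum>i\<in>UNIV. cnj (x$i) * A$i$j * y$j)"
    by (rule sum.swap)
  also have "\<dots> = ip (cadj A *v x) y"
    unfolding ip_def matrix_vector_mult_def cadj_def
    by (simp add: sum_distrib_left sum_distrib_right mult.commute mult.left_commute)
  finally show ?thesis .
qed

lemma cnj_ip: "cnj (ip x y) = ip y x"
  unfolding ip_def by (simp add: mult.commute)

lemma ip_add_right: "ip x (y + z) = ip x y + ip x z"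
  unfolding ip_def by (simp add: distrib_left sum.distrib)
lemma ip_diff_right: "ip x (y - z) = ip x y - ip x z"
  unfolding ip_def by (simp add: right_diff_distrib sum_subtractf)
lemma ip_add_left: "ip (y + z) x = ip y x + ip z x"
  unfolding ip_def by (simp add: distrib_right sum.distrib)
lemma ip_diff_left: "ip (y - z) x = ip y x - ip z x"
  unfolding ip_def by (simp add: left_diff_distrib sum_subtractf)

lemma cadj_cadj[simp]: "cadj (cadj A) = A"
  unfolding cadj_def by (simp add: vec_eq_iff)
lemma cadj_add[simp]: "cadj (A + B) = cadj A + cadj B"
  unfolding cadj_def by (simp add: vec_eq_iff)
lemma cadj_diff[simp]: "cadj (A - B) = cadj A - cadj B"
  unfolding cadj_def by (simp add: vec_eq_iff)
lemma cadj_uminus[simp]: "cadj (- A) = - cadj A"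
  unfolding cadj_def by (simp add: vec_eq_iff)
lemma cadj_scaleR[simp]: "cadj (c *\<^sub>R A) = c *\<^sub>R cadj A"
  unfolding cadj_def by (simp add: vec_eq_iff scaleR_conv_of_real[where 'a=complex] vector_scaleR_component)
lemma cadj_mat[simp]: "cadj (mat 1 :: ('n::finite) cm) = mat 1"
  unfolding cadj_def mat_def by (simp add: vec_eq_iff)
lemma cadj_mult: "cadj (A ** B) = cadj B ** (cadj A :: ('n::finite) cm)"
  unfolding cadj_def matrix_matrix_mult_def by (simp add: vec_eq_iff mult.commute)

lemma qform_cadj: "qform (cadj A) x = cnj (qform A x)"
  by (simp add: qform_ip ip_adj[of x "cadj A"] cnj_ip)

lemma herm_Im: "hermitian A \<Longrightarrow> Im (qform A x) = 0"
  using qform_cadj[of A x] unfolding hermitian_def by (metis cnj.sel(2) neg_equal_zero)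

lemma qform_add: "qform (A + B) x = qform A x + qform B x"
  by (simp add: qform_ip matrix_vector_mult_add_rdistrib ip_add_right)
lemma qform_diff: "qform (A - B) x = qform A x - qform B x"
  by (simp add: qform_ip matrix_vector_mult_diff_rdistrib ip_diff_right)
lemma qform_scaleR: "qform (c *\<^sub>R A) x = of_real c * qform A x"
  unfolding qform_def by (simp add: sum_distrib_left scaleR_conv_of_real[where 'a=complex] vector_scaleR_component mult_ac)

lemma qform_cong: "qform (cadj P ** M ** P) x = qform M (P *v x)"
  by (simp add: qform_ip matrix_vector_mul_assoc[symmetric] ip_adj[of x "cadj P"])

lemma Re_qform_cadj: "Re (qform (cadj A) x) = Re (qform A x)"
  by (simp add: qform_cadj)

lemma mm_scaleR_left: "(c *\<^sub>R A) ** B = c *\<^sub>R (A ** (B :: ('n::finite) cm))"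
  unfolding matrix_matrix_mult_def by (simp add: vec_eq_iff scaleR_conv_of_real[where 'a=complex] vector_scaleR_component sum_distrib_left mult_ac)
lemma mm_scaleR_right: "A ** (c *\<^sub>R B) = c *\<^sub>R (A ** (B :: ('n::finite) cm))"
  unfolding matrix_matrix_mult_def by (simp add: vec_eq_iff scaleR_conv_of_real[where 'a=complex] vector_scaleR_component sum_distrib_left mult_ac)
lemma mm_add_rdistrib: "(A + B) ** C = A ** C + B ** (C :: ('n::finite) cm)"
  unfolding matrix_matrix_mult_def by (simp add: vec_eq_iff distrib_right sum.distrib)
lemma mm_diff_rdistrib: "(A - B) ** C = A ** C - B ** (C :: ('n::finite) cm)"
  unfolding matrix_matrix_mult_def by (simp add: vec_eq_iff left_diff_distrib sum_subtractf)
lemma mm_diff_ldistrib: "C ** (A - B) = C ** A - C ** (B :: ('n::finite) cm)"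
  unfolding matrix_matrix_mult_def by (simp add: vec_eq_iff right_diff_distrib sum_subtractf)
lemma mm_uminus_left: "(- A) ** B = - (A ** (B :: ('n::finite) cm))"
  unfolding matrix_matrix_mult_def by (simp add: vec_eq_iff sum_negf)
lemma mm_uminus_right: "A ** (- B) = - (A ** (B :: ('n::finite) cm))"
  unfolding matrix_matrix_mult_def by (simp add: vec_eq_iff sum_negf)

lemma inv_right: "invertible (A :: ('n::finite) cm) \<Longrightarrow> A ** matrix_inv A = mat 1"
  unfolding invertible_def matrix_inv_def by (rule someI_ex[THEN conjunct1])
lemma inv_left: "invertible (A :: ('n::finite) cm) \<Longrightarrow> matrix_inv A ** A = mat 1"
  unfolding invertible_def matrix_inv_def by (rule someI_ex[THEN conjunct2])

lemma inv_unique: "A ** B = mat 1 \<Longrightarrow> matrix_inv (A :: ('n::finite) cm) = B"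
proof -
  assume h: "A ** B = mat 1"
  then have i: "invertible A" using invertible_right_inverse by blast
  have "matrix_inv A = matrix_inv A ** (A ** B)" using h by simp
  also have "\<dots> = B" by (simp add: matrix_mul_assoc inv_left[OF i])
  finally show ?thesis .
qed

lemma cadj_invertible: "invertible (A :: ('n::finite) cm) \<Longrightarrow> invertible (cadj A)"
  unfolding invertible_def by (metis cadj_mult cadj_mat)

lemma cadj_inv: "invertible (A :: ('n::finite) cm) \<Longrightarrow> matrix_inv (cadj A) = cadj (matrix_inv A)"
  by (rule inv_unique) (metis cadj_mult cadj_mat inv_left)


lemma qform_zero[simp]: "qform A 0 = 0"
  unfolding qform_def by simp

lemma posdef_herm: "pos_def H \<Longrightarrow> cadj H = H"
  unfolding pos_def_def hermitian_def by blast

lemma posdef_nonneg: "pos_def H \<Longrightarrow> 0 \<le> Re (qform H v)"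
  unfolding pos_def_def by (cases "v = 0") (auto intro: less_imp_le)

lemma Re_qform_part:
  assumes "(1/2::real) *\<^sub>R (W + cadj W) = H"
  shows "Re (qform W x) = Re (qform H x)"
proof -
  have e: "qform H x = of_real (1/2) * (qform W x + cnj (qform W x))"
    using assms[symmetric] by (simp only: qform_scaleR qform_add qform_cadj)
  show ?thesis unfolding e by simp
qed

lemma invertible_of_part:
  assumes pd: "pos_def H" and p: "(1/2::real) *\<^sub>R (W + cadj W) = (H :: ('n::finite) cm)"
  shows "invertible W"
proof -
  have "\<forall>x. W *v x = 0 \<longrightarrow> x = 0"
  proof (intro allI impI)
    fix x assume "W *v x = 0"
    then have "qform W x = 0" by (simp add: qform_ip ip_def)
    then have "Re (qform H x) = 0" using Re_qform_part[OF p, of x] by simp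
    then show "x = 0" using pd unfolding pos_def_def by force
  qed
  then show ?thesis
    using matrix_left_invertible_ker invertible_left_inverse by blast
qed

lemma G_posdef:
  assumes pd: "pos_def H" and p: "(1/2::real) *\<^sub>R (W + cadj W) = (H :: ('n::finite) cm)"
  shows "pos_def ((1/2::real) *\<^sub>R (matrix_inv W + matrix_inv (cadj W)))"
proof -
  have iW: "invertible W" using invertible_of_part[OF pd p] .
  define X where "X = matrix_inv W"
  have e: "matrix_inv (cadj W) = cadj X" unfolding X_def using cadj_inv[OF iW] .
  have WX: "W ** X = mat 1" unfolding X_def using inv_right[OF iW] .
  have herm: "hermitian ((1/2::real) *\<^sub>R (X + cadj X))"
    unfolding hermitian_def by (simp add: add.commute)
  have "Im (qform ((1/2::real) *\<^sub>R (X + cadj X)) x) = 0 \<and>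
        0 < Re (qform ((1/2::real) *\<^sub>R (X + cadj X)) x)" if "x \<noteq> 0" for x
  proof
    show "Im (qform ((1/2::real) *\<^sub>R (X + cadj X)) x) = 0" using herm_Im[OF herm] .
    define y where "y = X *v x"
    have xy: "x = W *v y" unfolding y_def by (simp add: matrix_vector_mul_assoc WX)
    have y0: "y \<noteq> 0" using that xy by auto
    have "Re (qform ((1/2::real) *\<^sub>R (X + cadj X)) x) = Re (qform X x)"
      by (simp add: qform_scaleR qform_add qform_cadj)
    also have "qform X x = cnj (qform W y)"
    proof -
      have "qform X x = ip x y" by (simp add: qform_ip y_def)
      also have "\<dots> = ip (W *v y) y" using xy by simp
      also have "\<dots> = cnj (qform W y)" by (simp add: qform_ip cnj_ip)
      finally show ?thesis .
    qed
    also have "Re (cnj (qform W y)) = Re (qform H y)"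
      using Re_qform_part[OF p] by simp
    finally show "0 < Re (qform ((1/2::real) *\<^sub>R (X + cadj X)) x)"
      using pd y0 unfolding pos_def_def by auto
  qed
  then show ?thesis using herm unfolding pos_def_def e X_def by blast
qed

lemma antitone:
  assumes hA: "hermitian A" and A0: "\<forall>v. 0 \<le> Re (qform A v)"
    and AB: "\<forall>v. Re (qform A v) \<le> Re (qform B v)"
    and AF: "A ** F = mat 1" and BG: "B ** G = (mat 1 :: ('n::finite) cm)"
  shows "Re (qform G x) \<le> Re (qform F x)"
proof -
  define w where "w = F *v x"
  define z where "z = G *v x"
  have Aw: "A *v w = x" unfolding w_def by (simp add: matrix_vector_mul_assoc AF)
  have Bz: "B *v z = x" unfolding z_def by (simp add: matrix_vector_mul_assoc BG)
  have cA: "cadj A = A" using hA unfolding hermitian_def .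
  have "0 \<le> Re (qform A (z - w))" using A0 by blast
  also have "qform A (z - w) = qform A z - ip z x - ip w (A *v z) + ip w x"
    by (simp add: qform_ip matrix_vector_mult_diff_distrib ip_diff_left ip_diff_right Aw)
  also have "ip w (A *v z) = ip x z" by (simp add: ip_adj cA Aw)
  finally have 1: "0 \<le> Re (qform A z) - Re (ip z x) - Re (ip x z) + Re (ip w x)" by simp
  have 2: "Re (qform A z) \<le> Re (ip z x)" using AB Bz by (metis qform_ip)
  have 3: "Re (ip z x) = Re (ip x z)" "Re (ip w x) = Re (ip x w)"
    by (subst cnj_ip[symmetric], simp)+
  have "qform G x = ip x z" "qform F x = ip x w" by (simp_all add: qform_ip w_def z_def)
  then show ?thesis using 1 2 3 by simp
qed


lemmas mm_simps = matrix_add_ldistrib mm_add_rdistrib mm_diff_rdistrib mm_diff_ldistrib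
  mm_scaleR_left mm_scaleR_right mm_uminus_left mm_uminus_right matrix_mul_assoc[symmetric]

lemma inv_cancel:
  assumes "A ** B = (mat 1 :: ('n::finite) cm)"
  shows "A ** (B ** C) = C"
  by (simp add: matrix_mul_assoc assms)

lemma main5:
  fixes H S :: "('n::finite) cm"
  assumes pd: "pos_def H" and sk: "cadj S = - S" and ab: "a\<^sup>2 \<le> b\<^sup>2"
  shows "loewner_ge
    ((1/2::real) *\<^sub>R (matrix_inv (H + a *\<^sub>R S) + matrix_inv (cadj (H + a *\<^sub>R S))))
    ((1/2::real) *\<^sub>R (matrix_inv (H + b *\<^sub>R S) + matrix_inv (cadj (H + b *\<^sub>R S))))"
proof -
  have hH: "cadj H = H" using posdef_herm[OF pd] .
  have part: "(1/2::real) *\<^sub>R ((H + c *\<^sub>R S) + cadj (H + c *\<^sub>R S)) = H" for c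
  proof -
    have e: "(H + c *\<^sub>R S) + cadj (H + c *\<^sub>R S) = H + H" by (simp add: hH sk)
    show ?thesis unfolding e by (rule scaleR_half_double)
  qed
  have partH: "(1/2::real) *\<^sub>R (H + cadj H) = H" by (simp add: hH scaleR_half_double)
  have iH: "invertible H" using invertible_of_part[OF pd partH] .
  define K where "K = matrix_inv H"
  have HK: "H ** K = mat 1" and KH: "K ** H = mat 1"
    unfolding K_def using inv_right[OF iH] inv_left[OF iH] by auto
  have hK: "cadj K = K" unfolding K_def using cadj_inv[OF iH] hH by simp
  have K0: "0 \<le> Re (qform K v)" for v
  proof -
    define u where "u = K *v v"
    have vu: "v = H *v u" unfolding u_def by (simp add: matrix_vector_mul_assoc HK)
    have "qform K v = ip v u" by (simp add: qform_ip u_def)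
    also have "\<dots> = ip (H *v u) u" using vu by simp
    also have "\<dots> = cnj (qform H u)" by (simp add: qform_ip cnj_ip)
    finally show ?thesis using posdef_nonneg[OF pd, of u] by simp
  qed
  define G where "G c = (1/2::real) *\<^sub>R (matrix_inv (H + c *\<^sub>R S) + matrix_inv (cadj (H + c *\<^sub>R S)))" for c
  define A where "A c = cadj (H + c *\<^sub>R S) ** K ** (H + c *\<^sub>R S)" for c
  have Aeq: "A c = H + (c\<^sup>2) *\<^sub>R (cadj S ** K ** S)" for c
  proof -
    have "A c = (H - c *\<^sub>R S) ** K ** (H + c *\<^sub>R S)" unfolding A_def by (simp add: hH sk)
    also have "\<dots> = H + (c\<^sup>2) *\<^sub>R (cadj S ** K ** S)"
      by (simp add: mm_simps inv_cancel[OF HK] inv_cancel[OF KH] HK KH sk algebra_simps power2_eq_square)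
    finally show ?thesis .
  qed
  have hA: "hermitian (A c)" for c
    unfolding hermitian_def A_def by (simp add: cadj_mult matrix_mul_assoc hK)
  have ReA: "Re (qform (A c) z) = Re (qform H z) + c\<^sup>2 * Re (qform K (S *v z))" for c z
    by (simp add: Aeq qform_add qform_scaleR qform_cong)
  have AG: "A c ** G c = mat 1" for c
  proof -
    define W where "W = H + c *\<^sub>R S"
    have iW: "invertible W" unfolding W_def using invertible_of_part[OF pd part] .
    have iW': "invertible (cadj W)" using cadj_invertible[OF iW] .
    define X where "X = matrix_inv W"
    define Y where "Y = matrix_inv (cadj W)"
    have WX: "W ** X = mat 1" and XW: "X ** W = mat 1" unfolding X_def using inv_right[OF iW] inv_left[OF iW] by auto
    have WY: "cadj W ** Y = mat 1" and YW: "Y ** cadj W = mat 1" unfolding Y_def using inv_right[OF iW'] inv_left[OF iW'] by auto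
    have pW: "H = (1/2::real) *\<^sub>R (W + cadj W)" using part[of c] unfolding W_def by simp
    have G1: "G c = (1/2::real) *\<^sub>R (X + Y)" unfolding G_def W_def X_def Y_def by simp
    have "X ** (H ** Y) = (1/2::real) *\<^sub>R (X + Y)"
      by (subst pW) (simp add: mm_simps inv_cancel[OF XW] XW YW WY algebra_simps)
    then have Gc: "G c = X ** (H ** Y)" using G1 by simp
    have "A c ** G c = cadj W ** (K ** (W ** (X ** (H ** Y))))"
      unfolding Gc A_def W_def[symmetric] by (simp add: matrix_mul_assoc)
    also have "\<dots> = mat 1" by (simp add: inv_cancel[OF WX] inv_cancel[OF KH] WY)
    finally show ?thesis .
  qed
  have hG: "hermitian (G c)" for c
    using G_posdef[OF pd part[of c]] unfolding G_def pos_def_def by blast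
  have ineq: "Re (qform (G b) x) \<le> Re (qform (G a) x)" for x
  proof (rule antitone[OF hA])
    show "\<forall>v. 0 \<le> Re (qform (A a) v)"
      using ReA posdef_nonneg[OF pd] K0 by (simp add: add_nonneg_nonneg)
    show "\<forall>v. Re (qform (A a) v) \<le> Re (qform (A b) v)"
      using ReA ab K0 by (simp add: mult_right_mono)
    show "A a ** G a = mat 1" "A b ** G b = mat 1" using AG by auto
  qed
  show ?thesis
    unfolding loewner_ge_def G_def[symmetric]
  proof (intro conjI hG)
    show "pos_semidef (G a - G b)"
      unfolding pos_semidef_def
    proof (intro conjI allI)
      show "hermitian (G a - G b)" using hG unfolding hermitian_def by simp
      fix x
      show "Im (qform (G a - G b) x) = 0" using hG[unfolded hermitian_def]
        by (intro herm_Im) (simp add: hermitian_def)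
      show "0 \<le> Re (qform (G a - G b) x)" using ineq[of x] by (simp add: qform_diff)
    qed
  qed
qed


lemma times2: "(A::complex^'n^'m) * 2 = 2 *\<^sub>R A"
  by (metis mult_2_right scaleR_2)

lemma eight_four: "8 *\<^sub>R (A::complex^'n^'m) = 4 *\<^sub>R (A * 2)"
  by (subst times2) simp

lemma four_two: "4 *\<^sub>R (Rt::complex^'n^'m) = 2 *\<^sub>R (Rt * 2)"
  by (metis mult_2_right scaleR_2 scaleR_scaleR numeral_Bit0 mult_2 real_scaleR_def)

lemma e_lemma:
  fixes R T Rt Ri :: "complex^'n^'n"
  assumes RRi: "R ** Ri = mat 1" and RiR: "Ri ** R = mat 1" and Teq: "T = 2 *\<^sub>R Rt - R"
  shows "T ** Ri ** T = 4 *\<^sub>R (Rt ** (Ri ** Rt)) - 4 *\<^sub>R Rt + R"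
  apply (subst (1 2) Teq) apply (simp add: mm_simps inv_cancel[OF RRi] RRi RiR algebra_simps)
  by (rule four_two)

lemma D_lemma:
  fixes R T Rt Ri Ti K :: "complex^'n^'n"
  assumes RtK: "Rt ** K = mat 1" and e1: "T ** Ri ** T = 4 *\<^sub>R (Rt ** (Ri ** Rt)) - 4 *\<^sub>R Rt + R"
  and e2: "R ** Ti ** R = 4 *\<^sub>R (Rt ** (Ti ** Rt)) - 4 *\<^sub>R Rt + T"
  and partR: "(1/2::real) *\<^sub>R (R + T) = Rt"
  shows "Rt - (1/2::real) *\<^sub>R (T ** Ri ** T + R ** Ti ** R) = 4 *\<^sub>R (Rt ** (K - (1/2::real) *\<^sub>R (Ri + Ti)) ** Rt)"
proof -
  have RT: "R + T = 2 *\<^sub>R Rt"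
  proof -
    have "2 *\<^sub>R Rt = 2 *\<^sub>R ((1/2::real) *\<^sub>R (R + T))" using partR by simp
    also have "\<dots> = R + T" by simp
    finally show ?thesis by simp
  qed
  have "T ** Ri ** T + R ** Ti ** R = 4 *\<^sub>R (Rt ** (Ri ** Rt)) + 4 *\<^sub>R (Rt ** (Ti ** Rt)) - 8 *\<^sub>R Rt + (R + T)"
    unfolding e1 e2 apply (simp add: algebra_simps) by (rule eight_four)
  also have "\<dots> = 4 *\<^sub>R (Rt ** (Ri ** Rt)) + 4 *\<^sub>R (Rt ** (Ti ** Rt)) - 6 *\<^sub>R Rt"
    unfolding RT apply (simp add: algebra_simps) by (simp flip: scaleR_add_left)
  finally have E: "T ** Ri ** T + R ** Ti ** R = 4 *\<^sub>R (Rt ** (Ri ** Rt)) + 4 *\<^sub>R (Rt ** (Ti ** Rt)) - 6 *\<^sub>R Rt" .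
  have 4: "4 *\<^sub>R Rt = Rt + 3 *\<^sub>R Rt" using scaleR_add_left[of 1 3 Rt] by simp
  show ?thesis unfolding E
    apply (simp add: mm_simps inv_cancel[OF RtK] RtK algebra_simps)
    using 4 by simp
qed
theorem lemma5p26:
  fixes R :: "complex^'n^'n"
  defines "Rt \<equiv> (1/2::real) *\<^sub>R (R + cadj R)"
      and "Rb \<equiv> (1/2::real) *\<^sub>R (R - cadj R)"
  assumes "pos_def Rt"
  shows "invertible R \<and>
    pos_def ((1/2::real) *\<^sub>R (matrix_inv R + matrix_inv (cadj R))) \<and>
    loewner_ge (matrix_inv ((1/2::real) *\<^sub>R (R + cadj R)))
                    ((1/2::real) *\<^sub>R (matrix_inv R + matrix_inv (cadj R))) \<and>
    loewner_ge ((1/2::real) *\<^sub>R (R + cadj R))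
                    ((1/2::real) *\<^sub>R (cadj R ** matrix_inv R ** cadj R + R ** matrix_inv (cadj R) ** R)) \<and>
    (\<forall>\<alpha> \<beta>::real. \<alpha> \<in> {-1..1} \<longrightarrow> \<beta> \<in> {-1..1} \<longrightarrow> \<bar>\<alpha>\<bar> \<le> \<bar>\<beta>\<bar> \<longrightarrow>
           loewner_ge
             ((1/2::real) *\<^sub>R (matrix_inv (Rt + \<alpha> *\<^sub>R Rb) + matrix_inv (cadj (Rt + \<alpha> *\<^sub>R Rb))))
             ((1/2::real) *\<^sub>R (matrix_inv (Rt + \<beta> *\<^sub>R Rb) + matrix_inv (cadj (Rt + \<beta> *\<^sub>R Rb)))))"
proof -
  have pd: "pos_def Rt" by fact
  have hRt: "cadj Rt = Rt" using posdef_herm[OF pd] .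
  have sk: "cadj Rb = - Rb" unfolding Rb_def by (simp flip: scaleR_minus_right)
  have RtRb: "Rt + Rb = R"
  proof -
    have "Rt + Rb = (1/2::real) *\<^sub>R ((R + cadj R) + (R - cadj R))"
      unfolding Rt_def Rb_def by (simp only: scaleR_add_right)
    also have "(R + cadj R) + (R - cadj R) = R + R" by simp
    finally show ?thesis by (simp only: scaleR_half_double)
  qed
  have partR: "(1/2::real) *\<^sub>R (R + cadj R) = Rt" unfolding Rt_def ..
  have iR: "invertible R" using invertible_of_part[OF pd partR] .
  have P2: "pos_def ((1/2::real) *\<^sub>R (matrix_inv R + matrix_inv (cadj R)))"
    using G_posdef[OF pd partR] .
  have P5: "\<forall>\<alpha> \<beta>::real. \<alpha> \<in> {-1..1} \<longrightarrow> \<beta> \<in> {-1..1} \<longrightarrow> \<bar>\<alpha>\<bar> \<le> \<bar>\<beta>\<bar> \<longrightarrow>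
           loewner_ge
             ((1/2::real) *\<^sub>R (matrix_inv (Rt + \<alpha> *\<^sub>R Rb) + matrix_inv (cadj (Rt + \<alpha> *\<^sub>R Rb))))
             ((1/2::real) *\<^sub>R (matrix_inv (Rt + \<beta> *\<^sub>R Rb) + matrix_inv (cadj (Rt + \<beta> *\<^sub>R Rb))))"
  proof (intro allI impI)
    fix a b :: real assume "\<bar>a\<bar> \<le> \<bar>b\<bar>"
    then have "a\<^sup>2 \<le> b\<^sup>2" by (metis abs_ge_zero power2_abs power_mono)
    then show "loewner_ge
             ((1/2::real) *\<^sub>R (matrix_inv (Rt + a *\<^sub>R Rb) + matrix_inv (cadj (Rt + a *\<^sub>R Rb))))
             ((1/2::real) *\<^sub>R (matrix_inv (Rt + b *\<^sub>R Rb) + matrix_inv (cadj (Rt + b *\<^sub>R Rb))))"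
      using main5[OF pd sk] by blast
  qed
  define K where "K = matrix_inv Rt"
  define G where "G = (1/2::real) *\<^sub>R (matrix_inv R + matrix_inv (cadj R))"
  have P3': "loewner_ge K G"
  proof -
    have "loewner_ge
             ((1/2::real) *\<^sub>R (matrix_inv (Rt + 0 *\<^sub>R Rb) + matrix_inv (cadj (Rt + 0 *\<^sub>R Rb))))
             ((1/2::real) *\<^sub>R (matrix_inv (Rt + 1 *\<^sub>R Rb) + matrix_inv (cadj (Rt + 1 *\<^sub>R Rb))))"
      using main5[OF pd sk, of 0 1] by simp
    moreover have "(1/2::real) *\<^sub>R (matrix_inv (Rt + 0 *\<^sub>R Rb) + matrix_inv (cadj (Rt + 0 *\<^sub>R Rb))) = K"
      unfolding K_def by (simp add: hRt scaleR_half_double)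
    moreover have "(1/2::real) *\<^sub>R (matrix_inv (Rt + 1 *\<^sub>R Rb) + matrix_inv (cadj (Rt + 1 *\<^sub>R Rb))) = G"
      unfolding G_def by (simp add: RtRb)
    ultimately show ?thesis by simp
  qed
  have P3: "loewner_ge (matrix_inv ((1/2::real) *\<^sub>R (R + cadj R)))
                    ((1/2::real) *\<^sub>R (matrix_inv R + matrix_inv (cadj R)))"
    using P3' unfolding K_def G_def partR .
  have P4: "loewner_ge ((1/2::real) *\<^sub>R (R + cadj R))
                    ((1/2::real) *\<^sub>R (cadj R ** matrix_inv R ** cadj R + R ** matrix_inv (cadj R) ** R))"
  proof -
    define T where "T = cadj R"
    define Ri where "Ri = matrix_inv R"
    define Ti where "Ti = matrix_inv T"
    have iT: "invertible T" unfolding T_def using cadj_invertible[OF iR] .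
    have RRi: "R ** Ri = mat 1" and RiR: "Ri ** R = mat 1"
      unfolding Ri_def using inv_right[OF iR] inv_left[OF iR] by auto
    have TTi: "T ** Ti = mat 1" and TiT: "Ti ** T = mat 1"
      unfolding Ti_def using inv_right[OF iT] inv_left[OF iT] by auto
    have iRt: "invertible Rt" using invertible_of_part[OF pd, of Rt] hRt by (simp add: scaleR_half_double)
    have RtK: "Rt ** K = mat 1" unfolding K_def using inv_right[OF iRt] .
    have Teq: "T = 2 *\<^sub>R Rt - R" unfolding Rt_def T_def by (simp add: algebra_simps)
    have Req: "R = 2 *\<^sub>R Rt - T" unfolding Rt_def T_def by (simp add: algebra_simps)
    have e1: "T ** Ri ** T = 4 *\<^sub>R (Rt ** (Ri ** Rt)) - 4 *\<^sub>R Rt + R"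
      by (rule e_lemma[OF RRi RiR Teq])
    have e2: "R ** Ti ** R = 4 *\<^sub>R (Rt ** (Ti ** Rt)) - 4 *\<^sub>R Rt + T"
      by (rule e_lemma[OF TTi TiT Req])
    have D: "Rt - (1/2::real) *\<^sub>R (T ** Ri ** T + R ** Ti ** R) = 4 *\<^sub>R (cadj Rt ** (K - G) ** Rt)"
      using D_lemma[OF RtK e1 e2 partR[unfolded T_def[symmetric]]]
      unfolding G_def Ri_def[symmetric] T_def[symmetric] Ti_def[symmetric] hRt
      by (simp add: matrix_mul_assoc)
    have hM: "hermitian ((1/2::real) *\<^sub>R (T ** Ri ** T + R ** Ti ** R))"
    proof -
      have c1: "cadj Ri = Ti" unfolding Ri_def Ti_def T_def using cadj_inv[OF iR] by simp
      have c2: "cadj Ti = Ri" using c1 by (metis cadj_cadj)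
      have c3: "cadj T = R" unfolding T_def by simp
      show ?thesis unfolding hermitian_def
        by (simp add: cadj_mult matrix_mul_assoc c1 c2 c3 T_def[symmetric] add.commute)
    qed
    have psd: "pos_semidef (K - G)" using P3' unfolding loewner_ge_def by blast
    have "pos_semidef (Rt - (1/2::real) *\<^sub>R (T ** Ri ** T + R ** Ti ** R))"
      unfolding pos_semidef_def
    proof (intro conjI allI)
      show hD: "hermitian (Rt - (1/2::real) *\<^sub>R (T ** Ri ** T + R ** Ti ** R))"
        using hM hRt unfolding hermitian_def by simp
      fix x
      show "Im (qform (Rt - (1/2::real) *\<^sub>R (T ** Ri ** T + R ** Ti ** R)) x) = 0"
        using herm_Im[OF hD] .
      show "0 \<le> Re (qform (Rt - (1/2::real) *\<^sub>R (T ** Ri ** T + R ** Ti ** R)) x)"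
        unfolding D using psd unfolding pos_semidef_def by (simp add: qform_scaleR qform_cong)
    qed
    then show ?thesis unfolding loewner_ge_def partR
      using hM hRt unfolding hermitian_def T_def Ri_def Ti_def by simp
  qed
  show ?thesis using iR P2 P3 P4 P5 by blast
qed

end
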